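(* Let $(T_0,\widetilde T_0)$ be a joint pair of closed abstract Friedrichs operators on a complex Hilbert space $\mathcal{H}$, and let $T_1:=\widetilde T_0^*$, $\widetilde T_1:=T_0^*$, $\mathcal{W}_0:=\operatorname{dom}T_0=\operatorname{dom}\widetilde T_0$ and $\mathcal{W}:=\operatorname{dom}T_1=\operatorname{dom}\widetilde T_1$. Then $$\mathcal{W}=\mathcal{W}_0\dotplus\operatorname{ker}T_1\dotplus\operatorname{ker}\widetilde T_1,$$ i.e. every $u\in\mathcal{W}$ can be written uniquely as $u=u_0+\nu+\tilde\nu$ with $u_0\in\mathcal{W}_0$, $\nu\in\operatorname{ker}T_1$, $\tilde\nu\in\operatorname{ker}\widetilde T_1$.
   Context: $\mathcal{H}$ is a complex Hilbert space with inner product $\langle\cdot,\cdot\rangle$ (linear in the first argument) and norm $\|\cdot\|$. A pair $(T,\widetilde T)$ of densely defined linear operators on $\mathcal{H}$ is a joint pair of abstract Friedrichs operators if: (T1) $T$ and $\widetilde T$ have a common dense domain $\mathcal{D}$ and $\langle T\varphi,\psi\rangle=\langle\varphi,\widetilde T\psi\rangle$ for all $\varphi,\psi\in\mathcal{D}$; (T2) there is $c>0$ with $\|(T+\widetilde T)\varphi\|\le c\|\varphi\|$ for all $\varphi\in\mathcal{D}$; (T3) there is $\mu_0>0$ with $\langle (T+\widetilde T)\varphi,\varphi\rangle\ge 2\mu_0\|\varphi\|^2$ for all $\varphi\in\mathcal{D}$. A joint pair of closed abstract Friedrichs operators is such a pair $(T_0,\widetilde T_0)$ in which both operators are closed. For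 such a pair one has $T_0\subseteq T_1$, $\widetilde T_0\subseteq\widetilde T_1$ and $\operatorname{dom}T_1=\operatorname{dom}\widetilde T_1$. *)

theory Defs
  imports "HOL-Analysis.Analysis"
begin

text \<open>A complex Hilbert space is modelled as a real Banach space (type class banach)
 together with a complex scalar multiplication sm extending the real one, and an
 inner product ip (linear in the first argument, conjugate symmetric) whose
 associated norm is the norm of the space.\<close>

definition complex_hilbert ::
  "(complex \<Rightarrow> 'a::banach \<Rightarrow> 'a) \<Rightarrow> ('a \<Rightarrow> 'a \<Rightarrow> complex) \<Rightarrow> bool" where
  "complex_hilbert sm ip \<longleftrightarrow>
     (\<forall>r x. sm (complex_of_real r) x = r *\<^sub>R x) \<and>
     (\<forall>a b x. sm (a + b) x = sm a x + sm b x) \<and>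
     (\<forall>a x y. sm a (x + y) = sm a x + sm a y) \<and>
     (\<forall>a b x. sm (a * b) x = sm a (sm b x)) \<and>
     (\<forall>x y z. ip (x + y) z = ip x z + ip y z) \<and>
     (\<forall>a x y. ip (sm a x) y = a * ip x y) \<and>
     (\<forall>x y. ip y x = cnj (ip x y)) \<and>
     (\<forall>x. ip x x = complex_of_real ((norm x)\<^sup>2))"

text \<open>A (partially defined) operator is given by its domain D and a function T
 (whose values outside D are irrelevant).  Linear: D is a complex subspace and T is
 complex linear on D.\<close>

definition lin_op :: "(complex \<Rightarrow> 'a::banach \<Rightarrow> 'a) \<Rightarrow> 'a set \<Rightarrow> ('a \<Rightarrow> 'a) \<Rightarrow> bool" where
  "lin_op sm D T \<longleftrightarrow> 0 \<in> D \<and>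
     (\<forall>x\<in>D. \<forall>y\<in>D. x + y \<in> D \<and> T (x + y) = T x + T y) \<and>
     (\<forall>a. \<forall>x\<in>D. sm a x \<in> D \<and> T (sm a x) = sm a (T x))"

definition densely_defined :: "'a::banach set \<Rightarrow> bool" where
  "densely_defined D \<longleftrightarrow> closure D = UNIV"

definition closed_op :: "'a::banach set \<Rightarrow> ('a \<Rightarrow> 'a) \<Rightarrow> bool" where
  "closed_op D T \<longleftrightarrow> closed {(x, T x) | x. x \<in> D}"

definition adj_dom :: "('a \<Rightarrow> 'a \<Rightarrow> complex) \<Rightarrow> 'a set \<Rightarrow> ('a \<Rightarrow> 'a) \<Rightarrow> 'a set" where
  "adj_dom ip D T = {v. \<exists>w. \<forall>u\<in>D. ip (T u) v = ip u w}"

definition adj :: "('a \<Rightarrow> 'a \<Rightarrow> complex) \<Rightarrow> 'a set \<Rightarrow> ('a \<Rightarrow> 'a) \<Rightarrow> 'a \<Rightarrow> 'a" where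
  "adj ip D T v = (THE w. \<forall>u\<in>D. ip (T u) v = ip u w)"

definition friedrichs_pair ::
  "(complex \<Rightarrow> 'a::banach \<Rightarrow> 'a) \<Rightarrow> ('a \<Rightarrow> 'a \<Rightarrow> complex) \<Rightarrow> 'a set \<Rightarrow> ('a \<Rightarrow> 'a) \<Rightarrow> ('a \<Rightarrow> 'a) \<Rightarrow> bool" where
  "friedrichs_pair sm ip D T Tt \<longleftrightarrow>
     lin_op sm D T \<and> lin_op sm D Tt \<and> densely_defined D \<and>
     (\<forall>\<phi>\<in>D. \<forall>\<psi>\<in>D. ip (T \<phi>) \<psi> = ip \<phi> (Tt \<psi>)) \<and>
     (\<exists>c>0. \<forall>\<phi>\<in>D. norm (T \<phi> + Tt \<phi>) \<le> c * norm \<phi>) \<and>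
     (\<exists>\<mu>0>0. \<forall>\<phi>\<in>D. Re (ip (T \<phi> + Tt \<phi>) \<phi>) \<ge> 2 * \<mu>0 * (norm \<phi>)\<^sup>2)"

definition closed_friedrichs_pair ::
  "(complex \<Rightarrow> 'a::banach \<Rightarrow> 'a) \<Rightarrow> ('a \<Rightarrow> 'a \<Rightarrow> complex) \<Rightarrow> 'a set \<Rightarrow> ('a \<Rightarrow> 'a) \<Rightarrow> ('a \<Rightarrow> 'a) \<Rightarrow> bool" where
  "closed_friedrichs_pair sm ip D T Tt \<longleftrightarrow>
     friedrichs_pair sm ip D T Tt \<and> closed_op D T \<and> closed_op D Tt"

end

theory Submission
  imports Defs
begin

locale hs =
  fixes sm :: "complex \<Rightarrow> 'a::banach \<Rightarrow> 'a" and ip :: "'a \<Rightarrow> 'a \<Rightarrow> complex"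
  assumes H: "complex_hilbert sm ip"
begin

lemma sm_real: "sm (complex_of_real r) x = r *\<^sub>R x"
  and sm_add_left: "sm (a + b) x = sm a x + sm b x"
  and sm_add_right: "sm a (x + y) = sm a x + sm a y"
  and sm_mult: "sm (a * b) x = sm a (sm b x)"
  and ip_add_left: "ip (x + y) z = ip x z + ip y z"
  and ip_sm_left: "ip (sm a x) y = a * ip x y"
  and ip_conj: "ip y x = cnj (ip x y)"
  and ip_self: "ip x x = complex_of_real ((norm x)\<^sup>2)"
  using H unfolding complex_hilbert_def by blast+

lemma sm_zero_right[simp]: "sm a 0 = 0"
  using sm_add_right[of a 0 0] by simp

lemma sm_one[simp]: "sm 1 x = x"
  using sm_real[of 1 x] by simp

lemma sm_zero_left[simp]: "sm 0 x = 0"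
  using sm_real[of 0 x] by simp

lemma sm_minus_right: "sm a (- x) = - sm a x"
  using sm_add_right[of a x "-x"] by (simp add: eq_neg_iff_add_eq_0 add.commute)

lemma sm_diff_right: "sm a (x - y) = sm a x - sm a y"
  using sm_add_right[of a x "-y"] sm_minus_right[of a y] by simp

lemma sm_minus_one: "sm (-1) x = - x"
  using sm_real[of "-1" x] by simp

lemma sm_scaleR: "sm a (r *\<^sub>R x) = r *\<^sub>R sm a x"
proof -
  have "sm a (r *\<^sub>R x) = sm a (sm (complex_of_real r) x)" by (simp add: sm_real)
  also have "\<dots> = sm (a * complex_of_real r) x" by (simp add: sm_mult)
  also have "\<dots> = sm (complex_of_real r * a) x" by (simp add: mult.commute)
  also have "\<dots> = sm (complex_of_real r) (sm a x)" by (simp add: sm_mult)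
  finally show ?thesis by (simp add: sm_real)
qed

lemma ip_add_right: "ip x (y + z) = ip x y + ip x z"
proof -
  have "ip x (y + z) = cnj (ip (y + z) x)" by (rule ip_conj)
  also have "\<dots> = cnj (ip y x) + cnj (ip z x)" by (simp add: ip_add_left)
  also have "\<dots> = ip x y + ip x z" by (simp add: ip_conj[of x y] ip_conj[of x z])
  finally show ?thesis .
qed

lemma ip_sm_right: "ip x (sm a y) = cnj a * ip x y"
proof -
  have "ip x (sm a y) = cnj (ip (sm a y) x)" by (rule ip_conj)
  also have "\<dots> = cnj a * cnj (ip y x)" by (simp add: ip_sm_left)
  also have "\<dots> = cnj a * ip x y" by (simp add: ip_conj[of x y])
  finally show ?thesis .
qed

lemma ip_zero_left[simp]: "ip 0 y = 0"
  using ip_add_left[of 0 0 y] by simp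

lemma ip_zero_right[simp]: "ip x 0 = 0"
  using ip_add_right[of x 0 0] by simp

lemma ip_minus_left: "ip (- x) y = - ip x y"
  using ip_add_left[of x "-x" y] by (simp add: eq_neg_iff_add_eq_0 add.commute)

lemma ip_minus_right: "ip x (- y) = - ip x y"
  using ip_add_right[of x y "-y"] by (simp add: eq_neg_iff_add_eq_0 add.commute)

lemma ip_diff_left: "ip (x - y) z = ip x z - ip y z"
  using ip_add_left[of x "-y" z] ip_minus_left[of y z] by simp

lemma ip_diff_right: "ip x (y - z) = ip x y - ip x z"
  using ip_add_right[of x y "-z"] ip_minus_right[of x z] by simp

lemma ip_scaleR_left: "ip (r *\<^sub>R x) y = r * ip x y"
  by (simp only: sm_real[symmetric] ip_sm_left)

lemma ip_scaleR_right: "ip x (r *\<^sub>R y) = r * ip x y"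
  by (simp only: sm_real[symmetric] ip_sm_right complex_cnj_complex_of_real)

lemma Re_ip_self: "Re (ip x x) = (norm x)\<^sup>2"
  by (simp add: ip_self)

lemma Re_ip_sym: "Re (ip y x) = Re (ip x y)"
  by (subst ip_conj) simp

lemma norm_add_sq: "(norm (x + y))\<^sup>2 = (norm x)\<^sup>2 + 2 * Re (ip x y) + (norm y)\<^sup>2"
proof -
  have "ip (x + y) (x + y) = ip x x + ip x y + ip y x + ip y y"
    by (simp add: ip_add_left ip_add_right)
  then have "Re (ip (x + y) (x + y)) = Re (ip x x) + Re (ip x y) + Re (ip y x) + Re (ip y y)"
    by simp
  then show ?thesis by (simp add: Re_ip_self Re_ip_sym)
qed

lemma norm_diff_sq: "(norm (x - y))\<^sup>2 = (norm x)\<^sup>2 - 2 * Re (ip x y) + (norm y)\<^sup>2"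
  using norm_add_sq[of x "-y"] by (simp add: ip_minus_right)

lemma Re_ip_le: "Re (ip x y) \<le> norm x * norm y"
proof -
  have "norm (x + y) \<le> norm x + norm y" by (rule norm_triangle_ineq)
  then have "(norm (x + y))\<^sup>2 \<le> (norm x + norm y)\<^sup>2"
    by (simp add: power_mono)
  then show ?thesis using norm_add_sq[of x y] by (simp add: power2_sum)
qed

lemma norm_sm: "norm (sm a x) = cmod a * norm x"
proof -
  have "complex_of_real ((norm (sm a x))\<^sup>2) = a * cnj a * complex_of_real ((norm x)\<^sup>2)"
    by (simp only: ip_self[symmetric] ip_sm_left ip_sm_right mult.assoc mult.commute mult.left_commute)
  also have "a * cnj a = complex_of_real ((cmod a)\<^sup>2)" by (metis complex_norm_square)
  finally have "(norm (sm a x))\<^sup>2 = (cmod a * norm x)\<^sup>2"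
    by (simp only: of_real_mult[symmetric] of_real_power[symmetric] of_real_eq_iff power_mult_distrib)
  then show ?thesis by (simp add: power2_eq_iff_nonneg)
qed

lemma bounded_linear_sm: "bounded_linear (sm a)"
proof
  show "sm a (x + y) = sm a x + sm a y" for x y by (rule sm_add_right)
  show "sm a (r *\<^sub>R x) = r *\<^sub>R sm a x" for r x by (rule sm_scaleR)
  show "\<exists>K. \<forall>x. norm (sm a x) \<le> norm x * K"
    by (rule exI[of _ "cmod a"]) (simp add: norm_sm)
qed

lemma cmod_ip_le: "cmod (ip x y) \<le> norm x * norm y"
proof (cases "ip x y = 0")
  case True then show ?thesis by simp
next
  case False
  define a where "a = cnj (ip x y) / cmod (ip x y)"
  have ca: "cmod a = 1" using False by (simp add: a_def norm_divide)
  have "a * ip x y = (ip x y * cnj (ip x y)) / complex_of_real (cmod (ip x y))"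
    by (simp add: a_def mult.commute)
  also have "\<dots> = complex_of_real ((cmod (ip x y))^2) / complex_of_real (cmod (ip x y))"
    by (metis complex_norm_square)
  also have "\<dots> = complex_of_real (cmod (ip x y))"
    using False by (simp add: power2_eq_square)
  finally have "a * ip x y = complex_of_real (cmod (ip x y))" .
  then have "cmod (ip x y) = Re (ip (sm a x) y)" by (simp add: ip_sm_left)
  also have "\<dots> \<le> norm (sm a x) * norm y" by (rule Re_ip_le)
  finally show ?thesis by (simp add: norm_sm ca)
qed

lemma bounded_bilinear_ip: "bounded_bilinear ip"
proof
  show "ip (a + a') b = ip a b + ip a' b" for a a' b by (rule ip_add_left)
  show "ip a (b + b') = ip a b + ip a b'" for a b b' by (rule ip_add_right)
  show "ip (r *\<^sub>R a) b = r *\<^sub>R ip a b" for r a b by (simp add: ip_scaleR_left scaleR_conv_of_real)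
  show "ip a (r *\<^sub>R b) = r *\<^sub>R ip a b" for r a b by (simp add: ip_scaleR_right scaleR_conv_of_real)
  show "\<exists>K. \<forall>a b. norm (ip a b) \<le> norm a * norm b * K"
    by (rule exI[of _ 1]) (simp add: cmod_ip_le)
qed

lemma ip_tendsto: "(f \<longlongrightarrow> a) F \<Longrightarrow> (g \<longlongrightarrow> b) F \<Longrightarrow> ((\<lambda>n. ip (f n) (g n)) \<longlongrightarrow> ip a b) F"
  by (rule bounded_bilinear.tendsto[OF bounded_bilinear_ip])

lemma sm_tendsto: "(f \<longlongrightarrow> a) F \<Longrightarrow> ((\<lambda>n. sm c (f n)) \<longlongrightarrow> sm c a) F"
  by (rule bounded_linear.tendsto[OF bounded_linear_sm])

lemma ip_self_eq_0: "ip x x = 0 \<longleftrightarrow> x = 0"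
  by (simp add: ip_self)


lemma real_var:
  fixes r s :: real
  assumes s: "s \<ge> 0" and h: "\<And>t. 0 \<le> - 2 * t * r + t\<^sup>2 * s"
  shows "r = 0"
proof -
  define t where "t = r / (s + 1)"
  have "(s + 1)\<^sup>2 * (- 2 * t * r + t\<^sup>2 * s) = - (r\<^sup>2 * (s + 2))"
  proof -
    have r: "r = t * (s + 1)" using s by (simp add: t_def)
    show ?thesis unfolding r by (simp add: power2_eq_square algebra_simps)
  qed
  moreover have "0 \<le> (s + 1)\<^sup>2 * (- 2 * t * r + t\<^sup>2 * s)" using h[of t] by simp
  ultimately have "r\<^sup>2 * (s + 2) \<le> 0" by linarith
  moreover have "0 \<le> r\<^sup>2 * (s + 2)" using s by simp
  ultimately have "r\<^sup>2 * (s + 2) = 0" by linarith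
  then show ?thesis using s by simp
qed

lemma parallelogram: "(norm ((a::'a) + b))\<^sup>2 + (norm (a - b))\<^sup>2 = 2 * (norm a)\<^sup>2 + 2 * (norm b)\<^sup>2"
  using norm_add_sq[of a b] norm_diff_sq[of a b] by simp

lemma projection:
  assumes cM: "closed M" and M0: "0 \<in> M" and Madd: "\<And>x y. x \<in> M \<Longrightarrow> y \<in> M \<Longrightarrow> x + y \<in> M"
    and Msm: "\<And>a x. x \<in> M \<Longrightarrow> sm a x \<in> M"
  shows "\<exists>p\<in>M. \<forall>m\<in>M. ip (x - p) m = 0"
proof -
  have MR: "r *\<^sub>R y \<in> M" if "y \<in> M" for r y using Msm[OF that, of "complex_of_real r"] by (simp add: sm_real)
  define F where "F = (\<lambda>m. (norm (x - m))\<^sup>2) ` M"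
  define d where "d = Inf F"
  have bdd: "bdd_below F" unfolding F_def by (rule bdd_belowI[of _ 0]) auto
  have Fne: "F \<noteq> {}" using M0 F_def by auto
  have low: "d \<le> (norm (x - m))\<^sup>2" if "m \<in> M" for m
    unfolding d_def by (rule cInf_lower[OF _ bdd]) (use that F_def in auto)
  have "\<exists>m\<in>M. (norm (x - m))\<^sup>2 < d + inverse (real (Suc n))" for n
  proof -
    have "Inf F < d + inverse (real (Suc n))" by (simp add: d_def)
    from cInf_lessD[OF Fne this] show ?thesis by (auto simp: F_def)
  qed
  then obtain ms where ms: "\<And>n. ms n \<in> M" "\<And>n. (norm (x - ms n))\<^sup>2 < d + inverse (real (Suc n))"
    by metis
  have par: "(norm (ms n - ms k))\<^sup>2 \<le> 2 * inverse (real (Suc n)) + 2 * inverse (real (Suc k))" for n k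
  proof -
    define a where "a = x - ms n"
    define b where "b = x - ms k"
    have ab: "a + b = 2 *\<^sub>R (x - (1/2) *\<^sub>R (ms n + ms k))"
      by (simp add: a_def b_def algebra_simps scaleR_2)
    have "(1/2) *\<^sub>R (ms n + ms k) \<in> M" using MR Madd ms(1) by blast
    then have "d \<le> (norm (x - (1/2) *\<^sub>R (ms n + ms k)))\<^sup>2" by (rule low)
    then have "4 * d \<le> (norm (a + b))\<^sup>2" by (simp add: ab power2_eq_square)
    moreover have "a - b = ms k - ms n" by (simp add: a_def b_def)
    moreover note parallelogram[of a b] ms(2)[of n] ms(2)[of k]
    ultimately show ?thesis by (simp add: a_def b_def norm_minus_commute)
  qed
  have "Cauchy ms"
  proof (rule metric_CauchyI)
    fix e :: real assume e: "0 < e"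
    then have "0 < e\<^sup>2 / 4" by simp
    from reals_Archimedean[OF this] obtain N where N: "inverse (real (Suc N)) < e\<^sup>2 / 4" by blast
    show "\<exists>M. \<forall>m\<ge>M. \<forall>n\<ge>M. dist (ms m) (ms n) < e"
    proof (intro exI allI impI)
      fix m n assume mn: "N \<le> m" "N \<le> n"
      have "inverse (real (Suc m)) \<le> inverse (real (Suc N))" "inverse (real (Suc n)) \<le> inverse (real (Suc N))"
        using mn by (auto intro!: le_imp_inverse_le)
      then have "(norm (ms m - ms n))\<^sup>2 < e\<^sup>2" using par[of m n] N by linarith
      then have "norm (ms m - ms n) < e" using e by (simp add: power_less_imp_less_base)
      then show "dist (ms m) (ms n) < e" by (simp add: dist_norm)
    qed
  qed
  then obtain p where p: "ms \<longlonglongrightarrow> p" using Cauchy_convergent_iff convergent_def by blast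
  have pM: "p \<in> M" using closed_sequentially[OF cM] ms(1) p by blast
  have "(\<lambda>n. (norm (x - ms n))\<^sup>2) \<longlonglongrightarrow> (norm (x - p))\<^sup>2"
    by (intro tendsto_intros p)
  moreover have "(\<lambda>n. d + inverse (real (Suc n))) \<longlonglongrightarrow> d + 0"
    by (intro tendsto_intros LIMSEQ_inverse_real_of_nat)
  ultimately have pd: "(norm (x - p))\<^sup>2 \<le> d"
    using ms(2) by (intro LIMSEQ_le[of "\<lambda>n. (norm (x - ms n))\<^sup>2" _ "\<lambda>n. d + inverse (real (Suc n))"]) (auto intro: less_imp_le)
  have Re0: "Re (ip (x - p) m) = 0" if m: "m \<in> M" for m
  proof (rule real_var)
    show "0 \<le> (norm m)\<^sup>2" by simp
    fix t :: real
    have "p + t *\<^sub>R m \<in> M" using Madd MR pM m by blast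
    then have "d \<le> (norm ((x - p) - t *\<^sub>R m))\<^sup>2" using low by (simp add: algebra_simps)
    also have "\<dots> = (norm (x - p))\<^sup>2 - 2 * t * Re (ip (x - p) m) + t\<^sup>2 * (norm m)\<^sup>2"
      by (simp add: norm_diff_sq ip_scaleR_right power_mult_distrib)
    finally show "0 \<le> -2 * t * Re (ip (x - p) m) + t\<^sup>2 * (norm m)\<^sup>2" using pd by linarith
  qed
  have "ip (x - p) m = 0" if m: "m \<in> M" for m
  proof -
    have "Re (ip (x - p) (sm \<i> m)) = 0" using Re0 Msm m by blast
    then have "Im (ip (x - p) m) = 0" by (simp add: ip_sm_right)
    then show ?thesis using Re0[OF m] by (simp add: complex_eq_iff)
  qed
  then show ?thesis using pM by blast
qed

lemma dense_zero:
  assumes dense: "closure D = UNIV" and h: "\<And>u. u \<in> D \<Longrightarrow> ip u w = 0"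
  shows "w = 0"
proof -
  have "w \<in> closure D" using dense by simp
  then obtain s where s: "\<And>n. s n \<in> D" "s \<longlonglongrightarrow> w" unfolding closure_sequential by blast
  have "(\<lambda>n. ip (s n) w) \<longlonglongrightarrow> ip w w" by (intro ip_tendsto s tendsto_const)
  moreover have "(\<lambda>n. ip (s n) w) = (\<lambda>n. 0)" using h s by auto
  ultimately have "ip w w = 0" using LIMSEQ_unique tendsto_const by metis
  then show ?thesis by (simp add: ip_self_eq_0)
qed

lemma adj_unique:
  assumes dense: "closure D = UNIV" and h: "\<forall>u\<in>D. ip (A u) v = ip u w"
  shows "adj ip D A v = w"
  unfolding adj_def
proof (rule the_equality)
  show "\<forall>u\<in>D. ip (A u) v = ip u w" by (rule h)
  fix w' assume h': "\<forall>u\<in>D. ip (A u) v = ip u w'"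
  have "w' - w = 0"
    by (rule dense_zero[OF dense]) (use h h' in \<open>simp add: ip_diff_right\<close>)
  then show "w' = w" by simp
qed

lemma adj_char:
  assumes dense: "closure D = UNIV"
  shows "(v \<in> adj_dom ip D A \<and> adj ip D A v = w) \<longleftrightarrow> (\<forall>u\<in>D. ip (A u) v = ip u w)"
proof
  assume a: "v \<in> adj_dom ip D A \<and> adj ip D A v = w"
  then obtain w0 where w0: "\<forall>u\<in>D. ip (A u) v = ip u w0" unfolding adj_dom_def by blast
  then have "adj ip D A v = w0" by (rule adj_unique[OF dense])
  then show "\<forall>u\<in>D. ip (A u) v = ip u w" using a w0 by simp
next
  assume h: "\<forall>u\<in>D. ip (A u) v = ip u w"
  then show "v \<in> adj_dom ip D A \<and> adj ip D A v = w"
    using adj_unique[OF dense h] unfolding adj_dom_def by blast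
qed

lemma adj_prop:
  assumes dense: "closure D = UNIV" and v: "v \<in> adj_dom ip D A" and u: "u \<in> D"
  shows "ip (A u) v = ip u (adj ip D A v)"
  using adj_char[OF dense, of v A "adj ip D A v"] v u by blast

lemma riesz:
  assumes ladd: "\<And>x y. l (x + y) = l x + l y" and lsm: "\<And>a x. l (sm a x) = a * l x"
    and lc: "continuous_on UNIV l"
  shows "\<exists>w. \<forall>x. l x = ip x w"
proof (cases "\<forall>x. l x = 0")
  case True then show ?thesis by (intro exI[of _ 0]) simp
next
  case False
  then obtain x0 where x0: "l x0 \<noteq> 0" by blast
  have l0: "l 0 = 0" using ladd[of 0 0] by simp
  have ldiff: "l (x - y) = l x - l y" for x y
    using ladd[of x "sm (-1) y"] lsm[of "-1" y] by (simp add: sm_minus_one)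
  define N where "N = {x. l x = 0}"
  have cN: "closed N"
    using continuous_closed_preimage_constant[OF lc closed_UNIV, of 0] by (simp add: N_def)
  obtain p where pN: "p \<in> N" and p: "\<forall>m\<in>N. ip (x0 - p) m = 0"
    using projection[OF cN, of x0] ladd lsm l0 unfolding N_def by auto
  define z where "z = x0 - p"
  have lz: "l z = l x0" using pN by (simp add: z_def ldiff N_def)
  have z0: "z \<noteq> 0" using lz x0 l0 by auto
  have c0: "ip z z \<noteq> 0" using z0 by (simp add: ip_self_eq_0)
  have "l x = ip x (sm (cnj (l z / ip z z)) z)" for x
  proof -
    define y where "y = x - sm (l x / l z) z"
    have "l y = 0" using lz x0 by (simp add: y_def ldiff lsm)
    then have "ip z y = 0" using p by (simp add: N_def z_def)
    then have "ip y z = 0" by (subst ip_conj) simp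
    then have "ip x z = (l x / l z) * ip z z" by (simp add: y_def ip_diff_left ip_sm_left)
    then show ?thesis using c0 lz x0 by (simp add: ip_sm_right field_simps)
  qed
  then show ?thesis by blast
qed

lemma extension_riesz:
  assumes dense: "closure D = UNIV" and D0: "0 \<in> D"
    and Dadd: "\<And>x y. x \<in> D \<Longrightarrow> y \<in> D \<Longrightarrow> x + y \<in> D"
    and Dsm: "\<And>a x. x \<in> D \<Longrightarrow> sm a x \<in> D"
    and ladd: "\<And>x y. x \<in> D \<Longrightarrow> y \<in> D \<Longrightarrow> l (x + y) = l x + l y"
    and lsm: "\<And>a x. x \<in> D \<Longrightarrow> l (sm a x) = a * l x"
    and C: "C \<ge> 0" and lb: "\<And>x. x \<in> D \<Longrightarrow> cmod (l x) \<le> C * norm x"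
  shows "\<exists>w. (\<forall>x\<in>D. l x = ip x w) \<and> norm w \<le> C"
proof -
  have Ddiff: "x - y \<in> D" if "x \<in> D" "y \<in> D" for x y
    using Dadd[OF that(1) Dsm[OF that(2), of "-1"]] by (simp add: sm_minus_one)
  have ldiff: "l (x - y) = l x - l y" if "x \<in> D" "y \<in> D" for x y
    using ladd[OF that(1) Dsm[OF that(2), of "-1"]] lsm[OF that(2), of "-1"] by (simp add: sm_minus_one)
  have uc: "uniformly_continuous_on D l"
    unfolding uniformly_continuous_on_def
  proof (intro allI impI)
    fix e :: real assume e: "0 < e"
    show "\<exists>d>0. \<forall>x\<in>D. \<forall>x'\<in>D. dist x' x < d \<longrightarrow> dist (l x') (l x) < e"
    proof (intro exI[of _ "e / (C + 1)"] conjI ballI impI)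
      show "0 < e / (C + 1)" using e C by simp
      fix x x' assume xx: "x \<in> D" "x' \<in> D" and dd: "dist x' x < e / (C + 1)"
      have "dist (l x') (l x) = cmod (l (x' - x))" using ldiff xx by (simp add: dist_norm)
      also have "\<dots> \<le> C * norm (x' - x)" using lb Ddiff xx by blast
      also have "\<dots> \<le> C * (e / (C + 1))" using dd C by (intro mult_left_mono) (auto simp: dist_norm)
      also have "\<dots> < e" using e C by (simp add: field_simps)
      finally show "dist (l x') (l x) < e" .
    qed
  qed
  obtain g where g: "uniformly_continuous_on (closure D) g" "\<And>x. x \<in> D \<Longrightarrow> l x = g x"
    using uniformly_continuous_on_extension_on_closure[OF uc] by metis
  have gc: "continuous_on UNIV g" using g(1) dense uniformly_continuous_imp_continuous by metis
  have seq: "\<exists>s. (\<forall>n. s n \<in> D) \<and> s \<longlonglongrightarrow> x" for x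
    using closure_sequential[of x D] dense by auto
  have glim: "(\<lambda>n. g (s n)) \<longlonglongrightarrow> g x" if "s \<longlonglongrightarrow> x" for s x
    by (rule continuous_on_tendsto_compose[OF gc that]) auto
  have gadd: "g (x + y) = g x + g y" for x y
  proof -
    obtain s t where s: "\<forall>n. s n \<in> D" "s \<longlonglongrightarrow> x" and t: "\<forall>n. t n \<in> D" "t \<longlonglongrightarrow> y"
      using seq by metis
    have "(\<lambda>n. g (s n + t n)) \<longlonglongrightarrow> g (x + y)" by (intro glim tendsto_intros s t)
    moreover have "(\<lambda>n. g (s n + t n)) = (\<lambda>n. g (s n) + g (t n))"
    proof
      fix n
      have "g (s n + t n) = l (s n + t n)" using g(2)[OF Dadd[OF s(1)[rule_format] t(1)[rule_format]]] by simp
      also have "\<dots> = l (s n) + l (t n)" using ladd s(1) t(1) by blast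
      finally show "g (s n + t n) = g (s n) + g (t n)" using g(2) s(1) t(1) by simp
    qed
    moreover have "(\<lambda>n. g (s n) + g (t n)) \<longlonglongrightarrow> g x + g y" by (intro tendsto_intros glim s t)
    ultimately show ?thesis using LIMSEQ_unique by metis
  qed
  have gsm: "g (sm a x) = a * g x" for a x
  proof -
    obtain s where s: "\<forall>n. s n \<in> D" "s \<longlonglongrightarrow> x" using seq by metis
    have "(\<lambda>n. g (sm a (s n))) \<longlonglongrightarrow> g (sm a x)" by (intro glim sm_tendsto s)
    moreover have "(\<lambda>n. g (sm a (s n))) = (\<lambda>n. a * g (s n))"
    proof
      fix n
      have "g (sm a (s n)) = l (sm a (s n))" using g(2)[OF Dsm[OF s(1)[rule_format]]] by simp
      also have "\<dots> = a * l (s n)" using lsm s(1) by blast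
      finally show "g (sm a (s n)) = a * g (s n)" using g(2) s(1) by simp
    qed
    moreover have "(\<lambda>n. a * g (s n)) \<longlonglongrightarrow> a * g x" by (intro tendsto_intros glim s)
    ultimately show ?thesis using LIMSEQ_unique by metis
  qed
  have gb: "cmod (g x) \<le> C * norm x" for x
  proof -
    obtain s where s: "\<forall>n. s n \<in> D" "s \<longlonglongrightarrow> x" using seq by metis
    have "(\<lambda>n. cmod (g (s n))) \<longlonglongrightarrow> cmod (g x)" by (intro tendsto_intros glim s)
    moreover have "(\<lambda>n. C * norm (s n)) \<longlonglongrightarrow> C * norm x" by (intro tendsto_intros s)
    moreover have "\<forall>n. cmod (g (s n)) \<le> C * norm (s n)" using s lb g(2) by simp
    ultimately show ?thesis by (intro LIMSEQ_le) auto
  qed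
  obtain w where w: "\<forall>x. g x = ip x w" using riesz[OF gadd gsm gc] by blast
  have "(norm w)\<^sup>2 \<le> C * norm w"
  proof -
    have "(norm w)\<^sup>2 = Re (g w)" using w by (simp add: Re_ip_self)
    also have "\<dots> \<le> cmod (g w)" by (rule complex_Re_le_cmod)
    also have "\<dots> \<le> C * norm w" by (rule gb)
    finally show ?thesis .
  qed
  then have "norm w \<le> C" by (cases "norm w = 0") (use C in \<open>auto simp: power2_eq_square\<close>)
  then show ?thesis using w g(2) by metis
qed
end

locale fr = hs +
  fixes W0 and T0 Tt0
  assumes F: "closed_friedrichs_pair sm ip W0 T0 Tt0"
begin

abbreviation "W \<equiv> adj_dom ip W0 Tt0"
abbreviation "T1 \<equiv> adj ip W0 Tt0"
abbreviation "Wt \<equiv> adj_dom ip W0 T0"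
abbreviation "Tt1 \<equiv> adj ip W0 T0"
abbreviation "K \<equiv> {v. v \<in> Wt \<and> Tt1 v = 0}"

lemma W0_0: "0 \<in> W0"
  and W0_add: "x \<in> W0 \<Longrightarrow> y \<in> W0 \<Longrightarrow> x + y \<in> W0"
  and W0_sm: "x \<in> W0 \<Longrightarrow> sm a x \<in> W0"
  and T0_add: "x \<in> W0 \<Longrightarrow> y \<in> W0 \<Longrightarrow> T0 (x + y) = T0 x + T0 y"
  and T0_sm: "x \<in> W0 \<Longrightarrow> T0 (sm a x) = sm a (T0 x)"
  and Tt0_add: "x \<in> W0 \<Longrightarrow> y \<in> W0 \<Longrightarrow> Tt0 (x + y) = Tt0 x + Tt0 y"
  and Tt0_sm: "x \<in> W0 \<Longrightarrow> Tt0 (sm a x) = sm a (Tt0 x)"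
  and dense: "closure W0 = UNIV"
  and sym: "x \<in> W0 \<Longrightarrow> y \<in> W0 \<Longrightarrow> ip (T0 x) y = ip x (Tt0 y)"
  and graph_closed: "closed {(x, T0 x) | x. x \<in> W0}"
proof -
  have P: "lin_op sm W0 T0" "lin_op sm W0 Tt0" "densely_defined W0"
    "\<forall>\<phi>\<in>W0. \<forall>\<psi>\<in>W0. ip (T0 \<phi>) \<psi> = ip \<phi> (Tt0 \<psi>)" "closed_op W0 T0"
    using F unfolding closed_friedrichs_pair_def friedrichs_pair_def by simp_all
  show "0 \<in> W0" using P(1) unfolding lin_op_def by simp
  show "x \<in> W0 \<Longrightarrow> y \<in> W0 \<Longrightarrow> x + y \<in> W0" using P(1) unfolding lin_op_def by simp
  show "x \<in> W0 \<Longrightarrow> sm a x \<in> W0" using P(1) unfolding lin_op_def by simp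
  show "x \<in> W0 \<Longrightarrow> y \<in> W0 \<Longrightarrow> T0 (x + y) = T0 x + T0 y" using P(1) unfolding lin_op_def by simp
  show "x \<in> W0 \<Longrightarrow> T0 (sm a x) = sm a (T0 x)" using P(1) unfolding lin_op_def by simp
  show "x \<in> W0 \<Longrightarrow> y \<in> W0 \<Longrightarrow> Tt0 (x + y) = Tt0 x + Tt0 y" using P(2) unfolding lin_op_def by simp
  show "x \<in> W0 \<Longrightarrow> Tt0 (sm a x) = sm a (Tt0 x)" using P(2) unfolding lin_op_def by simp
  show "closure W0 = UNIV" using P(3) unfolding densely_defined_def by simp
  show "x \<in> W0 \<Longrightarrow> y \<in> W0 \<Longrightarrow> ip (T0 x) y = ip x (Tt0 y)" using P(4) by simp
  show "closed {(x, T0 x) | x. x \<in> W0}" using P(5) unfolding closed_op_def by simp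
qed

lemma c_ex: "\<exists>c>0. \<forall>\<phi>\<in>W0. norm (T0 \<phi> + Tt0 \<phi>) \<le> c * norm \<phi>"
  using F unfolding closed_friedrichs_pair_def friedrichs_pair_def by blast

lemma mu_ex: "\<exists>\<mu>0>0. \<forall>\<phi>\<in>W0. Re (ip (T0 \<phi> + Tt0 \<phi>) \<phi>) \<ge> 2 * \<mu>0 * (norm \<phi>)\<^sup>2"
  using F unfolding closed_friedrichs_pair_def friedrichs_pair_def by blast

lemma T0_0: "T0 0 = 0"
  using T0_add[OF W0_0 W0_0] by simp

lemma W0_diff: "x \<in> W0 \<Longrightarrow> y \<in> W0 \<Longrightarrow> x - y \<in> W0"
  using W0_add[of x "sm (-1) y"] W0_sm[of y "-1"] by (simp add: sm_minus_one)

lemma T0_diff: "x \<in> W0 \<Longrightarrow> y \<in> W0 \<Longrightarrow> T0 (x - y) = T0 x - T0 y"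
  using T0_add[of x "sm (-1) y"] W0_sm[of y "-1"] T0_sm[of y "-1"] by (simp add: sm_minus_one)

lemma T1_char: "(v \<in> W \<and> T1 v = w) \<longleftrightarrow> (\<forall>\<phi>\<in>W0. ip (Tt0 \<phi>) v = ip \<phi> w)"
  by (rule adj_char[OF dense])

lemma Tt1_char: "(v \<in> Wt \<and> Tt1 v = w) \<longleftrightarrow> (\<forall>\<phi>\<in>W0. ip (T0 \<phi>) v = ip \<phi> w)"
  by (rule adj_char[OF dense])

lemma T1_prop: "v \<in> W \<Longrightarrow> \<phi> \<in> W0 \<Longrightarrow> ip (Tt0 \<phi>) v = ip \<phi> (T1 v)"
  by (rule adj_prop[OF dense])

lemma W0_W: "\<phi> \<in> W0 \<Longrightarrow> \<phi> \<in> W \<and> T1 \<phi> = T0 \<phi>"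
  unfolding T1_char
proof
  fix \<psi> assume "\<phi> \<in> W0" "\<psi> \<in> W0"
  then have "ip (Tt0 \<psi>) \<phi> = cnj (ip \<phi> (Tt0 \<psi>))" by (subst ip_conj) simp
  also have "\<dots> = cnj (ip (T0 \<phi>) \<psi>)" using sym \<open>\<phi> \<in> W0\<close> \<open>\<psi> \<in> W0\<close> by simp
  also have "\<dots> = ip \<psi> (T0 \<phi>)" by (subst (2) ip_conj) simp
  finally show "ip (Tt0 \<psi>) \<phi> = ip \<psi> (T0 \<phi>)" .
qed

lemma W_add: "v1 \<in> W \<Longrightarrow> v2 \<in> W \<Longrightarrow> v1 + v2 \<in> W \<and> T1 (v1 + v2) = T1 v1 + T1 v2"
  unfolding T1_char by (simp add: ip_add_right T1_prop)

lemma W_sm: "v \<in> W \<Longrightarrow> sm a v \<in> W \<and> T1 (sm a v) = sm a (T1 v)"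
  unfolding T1_char by (simp add: ip_sm_right T1_prop)

lemma W_diff: "v1 \<in> W \<Longrightarrow> v2 \<in> W \<Longrightarrow> v1 - v2 \<in> W \<and> T1 (v1 - v2) = T1 v1 - T1 v2"
  using W_add[of v1 "sm (-1) v2"] W_sm[of v2 "-1"] by (simp add: sm_minus_one)

lemma K_char: "v \<in> K \<longleftrightarrow> (\<forall>\<phi>\<in>W0. ip (T0 \<phi>) v = 0)"
  using Tt1_char[of v 0] by simp

lemma K_closed: "closed K"
  unfolding closed_sequential_limits
proof (intro allI impI)
  fix x l assume h: "(\<forall>n. x n \<in> K) \<and> x \<longlonglongrightarrow> l"
  show "l \<in> K" unfolding K_char
  proof
    fix \<phi> assume \<phi>: "\<phi> \<in> W0"
    have "(\<lambda>n. ip (T0 \<phi>) (x n)) \<longlonglongrightarrow> ip (T0 \<phi>) l" using h by (intro ip_tendsto tendsto_const) auto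
    moreover have "(\<lambda>n. ip (T0 \<phi>) (x n)) = (\<lambda>n. 0)" using h \<phi> K_char by blast
    ultimately show "ip (T0 \<phi>) l = 0" using LIMSEQ_unique tendsto_const by metis
  qed
qed

lemma K_0: "0 \<in> K" using K_char by simp
lemma K_add: "x \<in> K \<Longrightarrow> y \<in> K \<Longrightarrow> x + y \<in> K" using K_char by (simp add: ip_add_right)
lemma K_sm: "x \<in> K \<Longrightarrow> sm a x \<in> K" using K_char by (simp add: ip_sm_right)

lemma mu_T0: obtains \<mu> where "\<mu> > 0" "\<And>\<phi>. \<phi> \<in> W0 \<Longrightarrow> \<mu> * norm \<phi> \<le> norm (T0 \<phi>)"
proof -
  obtain \<mu>0 where \<mu>0: "\<mu>0 > 0" "\<And>\<phi>. \<phi>\<in>W0 \<Longrightarrow> Re (ip (T0 \<phi> + Tt0 \<phi>) \<phi>) \<ge> 2 * \<mu>0 * (norm \<phi>)\<^sup>2"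
    using mu_ex by blast
  have "\<mu>0 * norm \<phi> \<le> norm (T0 \<phi>)" if \<phi>: "\<phi> \<in> W0" for \<phi>
  proof -
    have "ip (Tt0 \<phi>) \<phi> = cnj (ip \<phi> (Tt0 \<phi>))" by (subst ip_conj) simp
    also have "\<dots> = cnj (ip (T0 \<phi>) \<phi>)" using sym \<phi> by simp
    finally have "Re (ip (Tt0 \<phi>) \<phi>) = Re (ip (T0 \<phi>) \<phi>)" by simp
    then have "\<mu>0 * (norm \<phi>)\<^sup>2 \<le> Re (ip (T0 \<phi>) \<phi>)" using \<mu>0(2)[OF \<phi>] by (simp add: ip_add_left)
    also have "\<dots> \<le> norm (T0 \<phi>) * norm \<phi>" by (rule Re_ip_le)
    finally have h: "\<mu>0 * (norm \<phi>)\<^sup>2 \<le> norm (T0 \<phi>) * norm \<phi>" .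
    show ?thesis
    proof (cases "norm \<phi> = 0")
      case True then show ?thesis by simp
    next
      case False
      then have "0 < norm \<phi>" by simp
      then show ?thesis using h by (simp add: power2_eq_square mult.assoc[symmetric])
    qed
  qed
  then show ?thesis using that \<mu>0(1) by blast
qed

lemma ran_closed: "closed (T0 ` W0)"
  unfolding closed_sequential_limits
proof (intro allI impI)
  fix y l assume h: "(\<forall>n. y n \<in> T0 ` W0) \<and> y \<longlonglongrightarrow> l"
  obtain \<mu> where \<mu>: "\<mu> > 0" "\<And>\<phi>. \<phi> \<in> W0 \<Longrightarrow> \<mu> * norm \<phi> \<le> norm (T0 \<phi>)" using mu_T0 by blast
  have "\<forall>n. \<exists>x. x \<in> W0 \<and> y n = T0 x" using h by blast
  then obtain x where "\<forall>n. x n \<in> W0 \<and> y n = T0 (x n)" by metis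
  then have x: "\<And>n. x n \<in> W0" "\<And>n. y n = T0 (x n)" by auto
  have cy: "Cauchy y" using h LIMSEQ_imp_Cauchy by blast
  have "Cauchy x"
  proof (rule metric_CauchyI)
    fix e :: real assume e: "0 < e"
    then obtain N where N: "\<forall>m\<ge>N. \<forall>n\<ge>N. dist (y m) (y n) < \<mu> * e"
      using metric_CauchyD[OF cy, of "\<mu> * e"] \<mu>(1) by auto
    show "\<exists>N. \<forall>m\<ge>N. \<forall>n\<ge>N. dist (x m) (x n) < e"
    proof (intro exI allI impI)
      fix m n assume "N \<le> m" "N \<le> n"
      then have "norm (T0 (x m - x n)) < \<mu> * e" using N x T0_diff by (simp add: dist_norm)
      moreover have "\<mu> * norm (x m - x n) \<le> norm (T0 (x m - x n))" using \<mu>(2) W0_diff x(1) by blast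
      ultimately have "\<mu> * norm (x m - x n) < \<mu> * e" by linarith
      then show "dist (x m) (x n) < e" using \<mu>(1) by (simp add: dist_norm)
    qed
  qed
  then obtain z where z: "x \<longlonglongrightarrow> z" using Cauchy_convergent_iff convergent_def by blast
  have "(\<lambda>n. (x n, T0 (x n))) \<longlonglongrightarrow> (z, l)" 
  proof (rule tendsto_Pair[OF z])
    have "(\<lambda>n. T0 (x n)) = y" using x(2) by auto
    then show "(\<lambda>n. T0 (x n)) \<longlonglongrightarrow> l" using h by simp
  qed
  moreover have "\<forall>n. (x n, T0 (x n)) \<in> {(x, T0 x) | x. x \<in> W0}" using x by blast
  ultimately have "(z, l) \<in> {(x, T0 x) | x. x \<in> W0}"
    using graph_closed unfolding closed_sequential_limits by (metis (no_types, lifting))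
  then show "l \<in> T0 ` W0" by blast
qed

lemma ran_decomp: "\<exists>a\<in>W0. y - T0 a \<in> K"
proof -
  have "\<exists>p\<in>T0 ` W0. \<forall>m\<in>T0 ` W0. ip (y - p) m = 0"
  proof (rule projection[OF ran_closed])
    show "0 \<in> T0 ` W0" using W0_0 T0_0 by force
    show "x + z \<in> T0 ` W0" if xz: "x \<in> T0 ` W0" "z \<in> T0 ` W0" for x z
    proof -
      obtain x' z' where "x' \<in> W0" "z' \<in> W0" "x = T0 x'" "z = T0 z'" using xz by blast
      then show ?thesis using W0_add T0_add by (simp add: image_iff) (metis)
    qed
    show "sm a x \<in> T0 ` W0" if xz: "x \<in> T0 ` W0" for a x
    proof -
      obtain x' where "x' \<in> W0" "x = T0 x'" using xz by blast
      then show ?thesis using W0_sm T0_sm by (simp add: image_iff) (metis)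
    qed
  qed
  then obtain a where a: "a \<in> W0" "\<forall>m\<in>T0 ` W0. ip (y - T0 a) m = 0" by blast
  have "y - T0 a \<in> K" unfolding K_char
  proof
    fix \<phi> assume "\<phi> \<in> W0"
    then have "ip (y - T0 a) (T0 \<phi>) = 0" using a by blast
    then show "ip (T0 \<phi>) (y - T0 a) = 0" by (subst ip_conj) simp
  qed
  then show ?thesis using a by blast
qed

lemma K_diff: "x \<in> K \<Longrightarrow> y \<in> K \<Longrightarrow> x - y \<in> K"
  using K_add[of x "sm (-1) y"] K_sm[of y "-1"] by (simp add: sm_minus_one)

lemma T1_0: "T1 0 = 0"
  using W0_W[OF W0_0] T0_0 by simp

lemma K_W_ex: "\<exists>C \<mu>. \<mu> > 0 \<and> (\<forall>v\<in>K. v \<in> W \<and> norm (T1 v) \<le> C * norm v \<and> \<mu> * (norm v)\<^sup>2 \<le> Re (ip (T1 v) v))"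
proof -
  obtain c where c: "c > 0" "\<And>\<phi>. \<phi>\<in>W0 \<Longrightarrow> norm (T0 \<phi> + Tt0 \<phi>) \<le> c * norm \<phi>"
    using c_ex by blast
  obtain \<mu>0 where \<mu>0: "\<mu>0 > 0" "\<And>\<phi>. \<phi>\<in>W0 \<Longrightarrow> Re (ip (T0 \<phi> + Tt0 \<phi>) \<phi>) \<ge> 2 * \<mu>0 * (norm \<phi>)\<^sup>2"
    using mu_ex by blast
  have "v \<in> W \<and> norm (T1 v) \<le> c * norm v \<and> (2 * \<mu>0) * (norm v)\<^sup>2 \<le> Re (ip (T1 v) v)" if v: "v \<in> K" for v
  proof -
    define l where "l = (\<lambda>\<phi>. ip (T0 \<phi> + Tt0 \<phi>) v)"
    have "\<exists>w. (\<forall>x\<in>W0. l x = ip x w) \<and> norm w \<le> c * norm v"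
    proof (rule extension_riesz[OF dense W0_0 W0_add W0_sm])
      show "l (x + y) = l x + l y" if "x \<in> W0" "y \<in> W0" for x y
        using that by (simp add: l_def T0_add Tt0_add ip_add_left algebra_simps)
      show "l (sm a x) = a * l x" if "x \<in> W0" for a x
        using that by (simp add: l_def T0_sm Tt0_sm sm_add_right[symmetric] ip_sm_left)
      show "0 \<le> c * norm v" using c by simp
      show "cmod (l x) \<le> c * norm v * norm x" if "x \<in> W0" for x
      proof -
        have "cmod (l x) \<le> norm (T0 x + Tt0 x) * norm v" unfolding l_def by (rule cmod_ip_le)
        also have "\<dots> \<le> c * norm x * norm v" using c(2)[OF that] by (simp add: mult_right_mono)
        finally show ?thesis by (simp add: algebra_simps)
      qed
    qed
    then obtain w where w: "\<And>x. x \<in> W0 \<Longrightarrow> l x = ip x w" "norm w \<le> c * norm v" by blast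
    have "\<forall>\<phi>\<in>W0. ip (Tt0 \<phi>) v = ip \<phi> w"
    proof
      fix \<phi> assume \<phi>: "\<phi> \<in> W0"
      have "ip (T0 \<phi>) v = 0" using v \<phi> K_char by blast
      then show "ip (Tt0 \<phi>) v = ip \<phi> w" using w(1)[OF \<phi>] by (simp add: l_def ip_add_left)
    qed
    then have vW: "v \<in> W" and Tv: "T1 v = w" using T1_char by blast+
    have "v \<in> closure W0" using dense by simp
    then obtain s where s: "\<And>n. s n \<in> W0" "s \<longlonglongrightarrow> v" unfolding closure_sequential by blast
    have lim1: "(\<lambda>n. Re (ip (s n) w)) \<longlonglongrightarrow> Re (ip v w)"
      by (intro tendsto_intros ip_tendsto s tendsto_const)
    have lim2: "(\<lambda>n. 2 * \<mu>0 * (norm (s n))\<^sup>2 - c * norm (s n) * norm (v - s n)) \<longlonglongrightarrow>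
        2 * \<mu>0 * (norm v)\<^sup>2 - c * norm v * norm (v - v)"
      by (intro tendsto_intros s)
    have le: "2 * \<mu>0 * (norm (s n))\<^sup>2 - c * norm (s n) * norm (v - s n) \<le> Re (ip (s n) w)" for n
    proof -
      define B where "B = T0 (s n) + Tt0 (s n)"
      have "ip (s n) w = ip B v" using w(1)[OF s(1)[of n]] by (simp add: l_def B_def)
      also have "\<dots> = ip B (s n) + ip B (v - s n)" by (simp add: ip_add_right[symmetric])
      finally have eq: "Re (ip (s n) w) = Re (ip B (s n)) + Re (ip B (v - s n))" by simp
      have "- Re (ip B (v - s n)) \<le> cmod (ip B (v - s n))"
        by (metis abs_Re_le_cmod abs_le_D2)
      also have "\<dots> \<le> norm B * norm (v - s n)" by (rule cmod_ip_le)
      also have "\<dots> \<le> c * norm (s n) * norm (v - s n)"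
        using c(2)[OF s(1)[of n]] by (simp add: B_def mult_right_mono)
      finally have "- Re (ip B (v - s n)) \<le> c * norm (s n) * norm (v - s n)" .
      moreover have "2 * \<mu>0 * (norm (s n))\<^sup>2 \<le> Re (ip B (s n))" using \<mu>0(2)[OF s(1)[of n]] by (simp add: B_def)
      ultimately show ?thesis using eq by linarith
    qed
    have "2 * \<mu>0 * (norm v)\<^sup>2 - c * norm v * norm (v - v) \<le> Re (ip v w)"
      by (rule LIMSEQ_le[OF lim2 lim1]) (use le in blast)
    then have "2 * \<mu>0 * (norm v)\<^sup>2 \<le> Re (ip (T1 v) v)" by (simp add: Tv Re_ip_sym)
    then show ?thesis using vW Tv w(2) by simp
  qed
  then show ?thesis using \<mu>0(1) by (intro exI[of _ c] exI[of _ "2 * \<mu>0"]) auto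
qed

lemma existence:
  assumes u: "u \<in> W"
  shows "\<exists>u0 \<nu> \<nu>t. u0 \<in> W0 \<and> \<nu> \<in> W \<and> T1 \<nu> = 0 \<and> \<nu>t \<in> K \<and> u = u0 + \<nu> + \<nu>t"
proof -
  obtain C \<mu> where \<mu>: "\<mu> > 0" and KW: "\<And>v. v \<in> K \<Longrightarrow> v \<in> W"
    "\<And>v. v \<in> K \<Longrightarrow> norm (T1 v) \<le> C * norm v" "\<And>v. v \<in> K \<Longrightarrow> \<mu> * (norm v)\<^sup>2 \<le> Re (ip (T1 v) v)"
    using K_W_ex by blast
  have projK: "\<exists>k\<in>K. \<forall>k'\<in>K. ip (y - k) k' = 0" for y
    by (rule projection[OF K_closed K_0 K_add K_sm])
  define M where "M = {y \<in> K. \<exists>v\<in>K. \<forall>k\<in>K. ip (T1 v) k = ip y k}"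
  have M0: "0 \<in> M" unfolding M_def using K_0 T1_0 by auto
  have Madd: "x + y \<in> M" if xyM: "x \<in> M" "y \<in> M" for x y
  proof -
    obtain vx vy where vx: "vx \<in> K" "\<forall>k\<in>K. ip (T1 vx) k = ip x k" and vy: "vy \<in> K" "\<forall>k\<in>K. ip (T1 vy) k = ip y k"
      using xyM unfolding M_def by blast
    have "T1 (vx + vy) = T1 vx + T1 vy" using W_add KW(1) vx vy by blast
    then have "\<forall>k\<in>K. ip (T1 (vx + vy)) k = ip (x + y) k" using vx vy by (simp add: ip_add_left)
    then show ?thesis using K_add vx vy xyM unfolding M_def by blast
  qed
  have Msm: "sm a x \<in> M" if xM: "x \<in> M" for a x
  proof -
    obtain vx where vx: "vx \<in> K" "\<forall>k\<in>K. ip (T1 vx) k = ip x k"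
      using xM unfolding M_def by blast
    have "T1 (sm a vx) = sm a (T1 vx)" using W_sm KW(1) vx by blast
    then have "\<forall>k\<in>K. ip (T1 (sm a vx)) k = ip (sm a x) k" using vx by (simp add: ip_sm_left)
    then show ?thesis using K_sm vx xM unfolding M_def by blast
  qed
  have Mclosed: "closed M"
    unfolding closed_sequential_limits
  proof (intro allI impI)
    fix y l assume h: "(\<forall>n. y n \<in> M) \<and> y \<longlonglongrightarrow> l"
    have lK: "l \<in> K" using h K_closed closed_sequential_limits unfolding M_def by blast
    have "\<forall>n. \<exists>v. v \<in> K \<and> (\<forall>k\<in>K. ip (T1 v) k = ip (y n) k)" using h unfolding M_def by blast
    then obtain x where "\<forall>n. x n \<in> K \<and> (\<forall>k\<in>K. ip (T1 (x n)) k = ip (y n) k)" by metis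
    then have x: "\<And>n. x n \<in> K" "\<And>n k. k \<in> K \<Longrightarrow> ip (T1 (x n)) k = ip (y n) k" by auto
    have bd: "\<mu> * norm (x m - x n) \<le> norm (y m - y n)" for m n
    proof -
      define d where "d = x m - x n"
      have dK: "d \<in> K" using K_diff x(1) by (simp add: d_def)
      have "T1 d = T1 (x m) - T1 (x n)" using W_diff KW(1) x(1) by (simp add: d_def)
      then have "ip (T1 d) d = ip (y m - y n) d" using x(2)[OF dK] by (simp add: ip_diff_left)
      then have "\<mu> * (norm d)\<^sup>2 \<le> Re (ip (y m - y n) d)" using KW(3)[OF dK] by simp
      also have "\<dots> \<le> norm (y m - y n) * norm d" by (rule Re_ip_le)
      finally have h2: "\<mu> * (norm d)\<^sup>2 \<le> norm (y m - y n) * norm d" .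
      show ?thesis
      proof (cases "norm d = 0")
        case True then show ?thesis by (simp add: d_def)
      next
        case False
        then have "0 < norm d" by simp
        then show ?thesis using h2 by (simp add: d_def power2_eq_square mult.assoc[symmetric])
      qed
    qed
    have cy: "Cauchy y" using h LIMSEQ_imp_Cauchy by blast
    have "Cauchy x"
    proof (rule metric_CauchyI)
      fix e :: real assume e: "0 < e"
      then obtain N where N: "\<forall>m\<ge>N. \<forall>n\<ge>N. dist (y m) (y n) < \<mu> * e"
        using metric_CauchyD[OF cy, of "\<mu> * e"] \<mu> by auto
      show "\<exists>N. \<forall>m\<ge>N. \<forall>n\<ge>N. dist (x m) (x n) < e"
      proof (intro exI allI impI)
        fix m n assume "N \<le> m" "N \<le> n"
        then have "norm (y m - y n) < \<mu> * e" using N by (simp add: dist_norm)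
        then have "\<mu> * norm (x m - x n) < \<mu> * e" using bd[of m n] by linarith
        then show "dist (x m) (x n) < e" using \<mu> by (simp add: dist_norm)
      qed
    qed
    then obtain z where z: "x \<longlonglongrightarrow> z" using Cauchy_convergent_iff convergent_def by blast
    have zK: "z \<in> K" using K_closed closed_sequential_limits x(1) z by blast
    have "(\<lambda>n. T1 (x n) - T1 z) \<longlonglongrightarrow> 0"
    proof (rule Lim_null_comparison)
      show "\<forall>\<^sub>F n in sequentially. norm (T1 (x n) - T1 z) \<le> C * norm (x n - z)"
      proof (rule always_eventually, rule allI)
        fix n
        have "T1 (x n) - T1 z = T1 (x n - z)" using W_diff KW(1) x(1) zK by simp
        then show "norm (T1 (x n) - T1 z) \<le> C * norm (x n - z)" using KW(2) K_diff x(1) zK by simp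
      qed
      have "(\<lambda>n. C * norm (x n - z)) \<longlonglongrightarrow> C * norm (z - z)" by (intro tendsto_intros z)
      then show "(\<lambda>n. C * norm (x n - z)) \<longlonglongrightarrow> 0" by simp
    qed
    then have T1x: "(\<lambda>n. T1 (x n)) \<longlonglongrightarrow> T1 z" by (simp add: LIM_zero_iff)
    have "\<forall>k\<in>K. ip (T1 z) k = ip l k"
    proof
      fix k assume k: "k \<in> K"
      have "(\<lambda>n. ip (T1 (x n)) k) \<longlonglongrightarrow> ip (T1 z) k" by (intro ip_tendsto T1x tendsto_const)
      moreover have "(\<lambda>n. ip (y n) k) \<longlonglongrightarrow> ip l k" using h by (intro ip_tendsto tendsto_const) auto
      moreover have "(\<lambda>n. ip (T1 (x n)) k) = (\<lambda>n. ip (y n) k)" using x(2)[OF k] by simp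
      ultimately show "ip (T1 z) k = ip l k" using LIMSEQ_unique by metis
    qed
    then show "l \<in> M" using lK zK unfolding M_def by blast
  qed
  obtain p where pM: "p \<in> M" and p: "\<forall>m\<in>M. ip (T1 u - p) m = 0"
    using projection[OF Mclosed M0 Madd Msm, of "T1 u"] by blast
  obtain v0 where v0: "v0 \<in> K" "\<forall>k\<in>K. ip (T1 v0) k = ip p k" using pM unfolding M_def by blast
  obtain r where rK: "r \<in> K" and r: "\<forall>k\<in>K. ip (T1 u - p - r) k = 0" using projK[of "T1 u - p"] by blast
  obtain q where qK: "q \<in> K" and q: "\<forall>k\<in>K. ip (T1 r - q) k = 0" using projK[of "T1 r"] by blast
  have qM: "q \<in> M" unfolding M_def using qK rK q by (auto simp: ip_diff_left)
  have "ip (T1 u - p) q = 0" using p qM by blast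
  moreover have "ip (T1 u - p - r) q = 0" using r qK by blast
  ultimately have "ip r q = 0" by (simp add: ip_diff_left)
  moreover have "ip (T1 r) r = ip q r" using q rK by (simp add: ip_diff_left)
  ultimately have "ip (T1 r) r = 0" by (metis ip_conj complex_cnj_zero)
  then have "\<mu> * (norm r)\<^sup>2 \<le> 0" using KW(3)[OF rK] by simp
  then have r0: "r = 0" using \<mu> by (simp add: mult_le_0_iff)
  have orth: "ip (T1 u - T1 v0) k = 0" if k: "k \<in> K" for k
    using r[rule_format, OF k] v0(2)[rule_format, OF k] r0 by (simp add: ip_diff_left)
  have uv: "u - v0 \<in> W" "T1 (u - v0) = T1 u - T1 v0" using W_diff u KW(1)[OF v0(1)] by blast+
  obtain a where a: "a \<in> W0" "T1 (u - v0) - T0 a \<in> K" using ran_decomp by blast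
  define k where "k = T1 (u - v0) - T0 a"
  have "ip (T1 (u - v0)) k = 0" using orth a(2) uv(2) by (simp add: k_def)
  moreover have "ip (T0 a) k = 0" using a K_char by (simp add: k_def)
  ultimately have "ip k k = 0" by (simp add: k_def ip_diff_left)
  then have "k = 0" by (simp add: ip_self_eq_0)
  then have T1eq: "T1 (u - v0) = T1 a" using W0_W[OF a(1)] by (simp add: k_def)
  define \<nu> where "\<nu> = u - v0 - a"
  have "\<nu> \<in> W \<and> T1 \<nu> = T1 (u - v0) - T1 a" unfolding \<nu>_def by (rule W_diff[OF uv(1)]) (use W0_W a in blast)
  then have "\<nu> \<in> W" "T1 \<nu> = 0" using T1eq by simp_all
  moreover have "u = a + \<nu> + v0" by (simp add: \<nu>_def)
  ultimately show ?thesis using a(1) v0(1) by blast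
qed

lemma uniqueness:
  assumes "a \<in> W0" "n \<in> W" "T1 n = 0" "t \<in> K" "a' \<in> W0" "n' \<in> W" "T1 n' = 0" "t' \<in> K"
    and eq: "a + n + t = a' + n' + t'"
  shows "a = a' \<and> n = n' \<and> t = t'"
proof -
  obtain C \<mu> where \<mu>: "\<mu> > 0" and KW: "\<And>v. v \<in> K \<Longrightarrow> v \<in> W"
    "\<And>v. v \<in> K \<Longrightarrow> \<mu> * (norm v)\<^sup>2 \<le> Re (ip (T1 v) v)"
    using K_W_ex by blast
  obtain \<mu>1 where \<mu>1: "\<mu>1 > 0" "\<And>\<phi>. \<phi> \<in> W0 \<Longrightarrow> \<mu>1 * norm \<phi> \<le> norm (T0 \<phi>)" using mu_T0 by blast
  define da where "da = a - a'"
  define dn where "dn = n - n'"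
  define dt where "dt = t - t'"
  have da: "da \<in> W0" using assms W0_diff by (simp add: da_def)
  have dn: "dn \<in> W" "T1 dn = 0" using assms W_diff[of n n'] by (simp_all add: dn_def)
  have dt: "dt \<in> K" using assms K_diff by (simp add: dt_def)
  have sum0: "da + dn + dt = 0" using eq by (simp add: da_def dn_def dt_def algebra_simps)
  have "da + dn \<in> W \<and> T1 (da + dn) = T1 da + T1 dn" using W_add W0_W da dn by blast
  then have s1: "da + dn \<in> W" "T1 (da + dn) = T0 da" using W0_W[OF da] dn by simp_all
  have "(da + dn) + dt \<in> W \<and> T1 ((da + dn) + dt) = T1 (da + dn) + T1 dt" using W_add s1 KW(1)[OF dt] by blast
  then have "T0 da + T1 dt = 0" using sum0 s1 T1_0 by simp
  then have "T1 dt = - T0 da" by (simp add: eq_neg_iff_add_eq_0 add.commute)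
  then have "ip (T1 dt) dt = - ip (T0 da) dt" by (simp add: ip_minus_left)
  also have "ip (T0 da) dt = 0" using dt da K_char by blast
  finally have "\<mu> * (norm dt)\<^sup>2 \<le> 0" using KW(2)[OF dt] by simp
  then have dt0: "dt = 0" using \<mu> by (simp add: mult_le_0_iff)
  then have "dn = - da" using sum0 by (simp add: eq_neg_iff_add_eq_0 add.commute)
  then have "T0 da = 0" using s1 T1_0 by simp
  then have "da = 0" using \<mu>1(2)[OF da] \<mu>1(1) by (simp add: mult_le_0_iff)
  then show ?thesis using dt0 \<open>dn = - da\<close> by (simp add: da_def dn_def dt_def)
qed

lemma K_sub_W: "v \<in> K \<Longrightarrow> v \<in> W"
  using K_W_ex by blast

end

theorem theorem3p1:
  fixes sm :: "complex \<Rightarrow> 'a::banach \<Rightarrow> 'a"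
    and ip :: "'a \<Rightarrow> 'a \<Rightarrow> complex"
    and W0 :: "'a set" and T0 Tt0 :: "'a \<Rightarrow> 'a"
  assumes H: "complex_hilbert sm ip"
    and F: "closed_friedrichs_pair sm ip W0 T0 Tt0"
  defines "W \<equiv> adj_dom ip W0 Tt0"
    and "T1 \<equiv> adj ip W0 Tt0"
    and "Wt \<equiv> adj_dom ip W0 T0"
    and "Tt1 \<equiv> adj ip W0 T0"
  shows "(\<forall>u. u \<in> W \<longleftrightarrow>
            (\<exists>u0 \<nu> \<nu>t. u0 \<in> W0 \<and> \<nu> \<in> W \<and> T1 \<nu> = 0 \<and> \<nu>t \<in> Wt \<and> Tt1 \<nu>t = 0
                    \<and> u = u0 + \<nu> + \<nu>t))
       \<and> (\<forall>u\<in>W. \<exists>!(u0, \<nu>, \<nu>t). u0 \<in> W0 \<and> \<nu> \<in> W \<and> T1 \<nu> = 0 \<and> \<nu>t \<in> Wt \<and> Tt1 \<nu>t = 0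
                    \<and> u = u0 + \<nu> + \<nu>t)"
proof -
  interpret fr sm ip W0 T0 Tt0
    by unfold_locales (fact H, fact F)
  have A: "u \<in> W \<longleftrightarrow>
            (\<exists>u0 \<nu> \<nu>t. u0 \<in> W0 \<and> \<nu> \<in> W \<and> T1 \<nu> = 0 \<and> \<nu>t \<in> Wt \<and> Tt1 \<nu>t = 0
                    \<and> u = u0 + \<nu> + \<nu>t)" for u
  proof
    assume "u \<in> W"
    then show "\<exists>u0 \<nu> \<nu>t. u0 \<in> W0 \<and> \<nu> \<in> W \<and> T1 \<nu> = 0 \<and> \<nu>t \<in> Wt \<and> Tt1 \<nu>t = 0
                    \<and> u = u0 + \<nu> + \<nu>t"
      using existence unfolding W_def T1_def Wt_def Tt1_def by blast
  next
    assume "\<exists>u0 \<nu> \<nu>t. u0 \<in> W0 \<and> \<nu> \<in> W \<and> T1 \<nu> = 0 \<and> \<nu>t \<in> Wt \<and> Tt1 \<nu>t = 0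
                    \<and> u = u0 + \<nu> + \<nu>t"
    then obtain u0 \<nu> \<nu>t where h: "u0 \<in> W0" "\<nu> \<in> adj_dom ip W0 Tt0" "\<nu>t \<in> K" "u = u0 + \<nu> + \<nu>t"
      unfolding W_def T1_def Wt_def Tt1_def by blast
    have "u0 + \<nu> \<in> adj_dom ip W0 Tt0" using W_add W0_W h by blast
    then have "u0 + \<nu> + \<nu>t \<in> adj_dom ip W0 Tt0" using W_add K_sub_W h by blast
    then show "u \<in> W" using h unfolding W_def by simp
  qed
  have B: "\<exists>!(u0, \<nu>, \<nu>t). u0 \<in> W0 \<and> \<nu> \<in> W \<and> T1 \<nu> = 0 \<and> \<nu>t \<in> Wt \<and> Tt1 \<nu>t = 0
                    \<and> u = u0 + \<nu> + \<nu>t" if u: "u \<in> W" for u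
  proof -
    obtain a n t where ant: "a \<in> W0" "n \<in> adj_dom ip W0 Tt0" "adj ip W0 Tt0 n = 0" "t \<in> K" "u = a + n + t"
      using existence u unfolding W_def by blast
    show ?thesis
    proof (rule ex1I[of _ "(a, n, t)"])
      show "case (a, n, t) of (u0, \<nu>, \<nu>t) \<Rightarrow> u0 \<in> W0 \<and> \<nu> \<in> W \<and> T1 \<nu> = 0 \<and> \<nu>t \<in> Wt \<and> Tt1 \<nu>t = 0
                    \<and> u = u0 + \<nu> + \<nu>t"
        using ant unfolding W_def T1_def Wt_def Tt1_def by simp
    next
      fix y assume y: "case y of (u0, \<nu>, \<nu>t) \<Rightarrow> u0 \<in> W0 \<and> \<nu> \<in> W \<and> T1 \<nu> = 0 \<and> \<nu>t \<in> Wt \<and> Tt1 \<nu>t = 0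
                    \<and> u = u0 + \<nu> + \<nu>t"
      obtain a' n' t' where yy: "y = (a', n', t')" by (cases y) auto
      have h: "a' \<in> W0" "n' \<in> adj_dom ip W0 Tt0" "adj ip W0 Tt0 n' = 0" "t' \<in> K" "u = a' + n' + t'"
        using y unfolding yy W_def T1_def Wt_def Tt1_def by auto
      have "a' = a \<and> n' = n \<and> t' = t"
        by (rule uniqueness) (use h ant in auto)
      then show "y = (a, n, t)" using yy by simp
    qed
  qed
  show ?thesis using A B by blast
qed

end
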